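(* Consider the disclosure model described in the context, and suppose $\pi(\theta,e)=\tilde\pi(\theta,e,e)=\pi_0(e)-\theta\,(ae+b)$ for some function $\pi_0$ and constants $a,b\in\mathbb{R}$ with $a>0$ (respectively $a<0$). Suppose $f$ is continuously differentiable on the interior of $\Theta$. Suppose further that there exists $\theta_\blacktriangle\in\Theta$ such that: (i) $\underline{\mathbf e}(\theta)=\bar e$ for all $\theta\in[\underline\theta,\theta_\blacktriangle]$ (respectively for all $\theta\in[\theta_\blacktriangle,\bar\theta]$); and (ii) $f$ is nonincreasing on $[\theta_\blacktriangle,\bar\theta]$ (respectively nondecreasing on $[\underline\theta,\theta_\blacktriangle]$). Then full disclosure is the only efficient policy: the Pareto frontier of $\{(\Gamma(d),\Pi(d)):d\in\mathcal{D}\}$ consists of the single point $(\Gamma(d_F),\Pi(d_F))$, where $d_F$ is a full-disclosure policy.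
   Context: Emissions lie in $E=[0,\bar e]$ with $\bar e>0$. The firm's type $\theta\in\Theta=[\underline\theta,\bar\theta]$ is private information with density $f=F'$, which is continuous on $\Theta$. The firm's profit is $\tilde\pi(\theta,e,\tilde e)$ with actual emission $e$ and market-perceived emission $\tilde e$; it is strictly increasing in $e$ and strictly decreasing in $\tilde e$. Standing assumptions: $\tilde\pi$ is continuous on $\Theta\times E\times E$ and $C^2$ on its interior; $\pi(\theta,e):=\tilde\pi(\theta,e,e)$ is strictly concave in $e$; and $\pi(\theta,0)<\pi(\theta,\bar e)$ for all $\theta$. $\underline{\mathbf e}(\theta):=\min\{e\in E:\pi(\theta,e)\ge\pi(\theta,\bar e)\}$ and $\hat{\mathbf e}(\theta):=\arg\max_{e\in E}\pi(\theta,e)$. A disclosure policy is a function $d:E\to E$ (a partition of $E$ into level sets). An emission $e$ is belief-compatible under $d$ if $e\ge e'$ whenever $d(e')=d(e)$; $\tilde E_d$ is the set of such levels. The type-$\theta$ firm chooses $e\in\tilde E_d$ maximizing $\pi(\theta,e)$. $\mathcal{D}$ is the set of policies for which the maximum is attained for every type. For $d\in\mathcal{D}$, $\pi_d(\theta)=\max_{e\in\tilde E_d}\pi(\theta,e)$, and $\gamma_d(\theta)$ is the lowest maximizer. Further, $\Pi(d)=\int_\Theta\pi_d\,dF$ and $\Gamma(d)=\int_\Theta\gamma_d\,dF$. A policy $d\in\mathcal{D}$ is Pareto efficient if there is no $d'\in\mathcal{D}$ with $\Pi(d')\ge\Pi(d)$ and $\Gamma(d')\le\Gamma(d)$, at least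 one strict. A full-disclosure policy is a policy in which every $e\in\hat{\mathbf e}(\Theta)$ is alone in its cell ($d(e')=d(e)$ implies $e'=e$), so each type can attain $\max_E\pi(\theta,\cdot)$. *)

theory Defs
  imports "HOL-Analysis.Analysis"
begin

(* Emission set E = [0, ebar]; type set Theta = [tlo, thi]. *)

definition C2_on :: "('a::euclidean_space) set \<Rightarrow> ('a \<Rightarrow> real) \<Rightarrow> bool" where
  "C2_on S g \<longleftrightarrow>
     (\<exists>(D :: 'a \<Rightarrow> ('a \<Rightarrow>\<^sub>L real)) (D2 :: 'a \<Rightarrow> ('a \<Rightarrow>\<^sub>L ('a \<Rightarrow>\<^sub>L real))).
        (\<forall>x\<in>S. (g has_derivative blinfun_apply (D x)) (at x)) \<and>
        (\<forall>x\<in>S. (D has_derivative blinfun_apply (D2 x)) (at x)) \<and>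
        continuous_on S D2)"

definition pi_of :: "(real \<Rightarrow> real \<Rightarrow> real \<Rightarrow> real) \<Rightarrow> real \<Rightarrow> real \<Rightarrow> real" where
  "pi_of tpi \<theta> e = tpi \<theta> e e"

definition e_low :: "(real \<Rightarrow> real \<Rightarrow> real \<Rightarrow> real) \<Rightarrow> real \<Rightarrow> real \<Rightarrow> real" where
  "e_low tpi ebar \<theta> = (LEAST e. e \<in> {0..ebar} \<and> pi_of tpi \<theta> e \<ge> pi_of tpi \<theta> ebar)"

definition belief_compatible :: "real \<Rightarrow> (real \<Rightarrow> real) \<Rightarrow> real set" where
  "belief_compatible ebar d = {e \<in> {0..ebar}. \<forall>e'\<in>{0..ebar}. d e' = d e \<longrightarrow> e' \<le> e}"

definition policies :: "(real \<Rightarrow> real \<Rightarrow> real \<Rightarrow> real) \<Rightarrow> real \<Rightarrow> real \<Rightarrow> real \<Rightarrow> (real \<Rightarrow> real) set" where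
  "policies tpi tlo thi ebar =
     {d. d ` {0..ebar} \<subseteq> {0..ebar} \<and>
         (\<forall>\<theta>\<in>{tlo..thi}. \<exists>e\<in>belief_compatible ebar d.
             \<forall>e'\<in>belief_compatible ebar d. pi_of tpi \<theta> e' \<le> pi_of tpi \<theta> e)}"

definition pi_d :: "(real \<Rightarrow> real \<Rightarrow> real \<Rightarrow> real) \<Rightarrow> real \<Rightarrow> (real \<Rightarrow> real) \<Rightarrow> real \<Rightarrow> real" where
  "pi_d tpi ebar d \<theta> = Sup (pi_of tpi \<theta> ` belief_compatible ebar d)"

definition gamma_d :: "(real \<Rightarrow> real \<Rightarrow> real \<Rightarrow> real) \<Rightarrow> real \<Rightarrow> (real \<Rightarrow> real) \<Rightarrow> real \<Rightarrow> real" where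
  "gamma_d tpi ebar d \<theta> =
     (LEAST e. e \<in> belief_compatible ebar d \<and> pi_of tpi \<theta> e = pi_d tpi ebar d \<theta>)"

definition Profit :: "(real \<Rightarrow> real \<Rightarrow> real \<Rightarrow> real) \<Rightarrow> real \<Rightarrow> real \<Rightarrow> real \<Rightarrow> (real \<Rightarrow> real) \<Rightarrow> (real \<Rightarrow> real) \<Rightarrow> real" where
  "Profit tpi tlo thi ebar f d = integral {tlo..thi} (\<lambda>\<theta>. pi_d tpi ebar d \<theta> * f \<theta>)"

definition Emission :: "(real \<Rightarrow> real \<Rightarrow> real \<Rightarrow> real) \<Rightarrow> real \<Rightarrow> real \<Rightarrow> real \<Rightarrow> (real \<Rightarrow> real) \<Rightarrow> (real \<Rightarrow> real) \<Rightarrow> real" where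
  "Emission tpi tlo thi ebar f d = integral {tlo..thi} (\<lambda>\<theta>. gamma_d tpi ebar d \<theta> * f \<theta>)"

definition pareto_efficient :: "(real \<Rightarrow> real \<Rightarrow> real \<Rightarrow> real) \<Rightarrow> real \<Rightarrow> real \<Rightarrow> real \<Rightarrow> (real \<Rightarrow> real) \<Rightarrow> (real \<Rightarrow> real) \<Rightarrow> bool" where
  "pareto_efficient tpi tlo thi ebar f d \<longleftrightarrow>
     d \<in> policies tpi tlo thi ebar \<and>
     \<not> (\<exists>d'\<in>policies tpi tlo thi ebar.
          Profit tpi tlo thi ebar f d' \<ge> Profit tpi tlo thi ebar f d \<and>
          Emission tpi tlo thi ebar f d' \<le> Emission tpi tlo thi ebar f d \<and>
          (Profit tpi tlo thi ebar f d' > Profit tpi tlo thi ebar f d \<or>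
           Emission tpi tlo thi ebar f d' < Emission tpi tlo thi ebar f d))"

definition full_disclosure :: "(real \<Rightarrow> real \<Rightarrow> real \<Rightarrow> real) \<Rightarrow> real \<Rightarrow> real \<Rightarrow> real \<Rightarrow> (real \<Rightarrow> real) \<Rightarrow> bool" where
  "full_disclosure tpi tlo thi ebar d \<longleftrightarrow>
     d ` {0..ebar} \<subseteq> {0..ebar} \<and>
     (\<forall>\<theta>\<in>{tlo..thi}. \<forall>e\<in>{0..ebar}.
        (\<forall>e''\<in>{0..ebar}. pi_of tpi \<theta> e'' \<le> pi_of tpi \<theta> e) \<longrightarrow>
        (\<forall>e'\<in>{0..ebar}. d e' = d e \<longrightarrow> e' = e))"

end

theory Submission
  imports Defs
begin

lemma abel_ineq:
  fixes Fs Gs Es Ds :: "nat \<Rightarrow> real" and B c :: real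
  assumes c: "c > 0"
   and Fdec: "\<And>k. k < n \<Longrightarrow> Fs (Suc k) \<le> Fs k"
   and Fnn: "\<And>k. k \<le> n \<Longrightarrow> 0 \<le> Fs k"
   and Gdec: "\<And>k. k < n \<Longrightarrow> Gs (Suc k) \<le> Gs k"
   and Gb: "\<And>k. k \<le> n \<Longrightarrow> 0 \<le> Gs k \<and> Gs k \<le> B"
   and Eb: "\<And>k. k \<le> n \<Longrightarrow> 0 \<le> Es k \<and> Es k \<le> B"
   and D0: "Ds 0 = 0" and Dnn: "\<And>k. k \<le> n \<Longrightarrow> 0 \<le> Ds k"
   and env: "\<And>k. k < n \<Longrightarrow> Ds (Suc k) - Ds k \<le> c * (Gs k - Es (Suc k))"
  shows "(\<Sum>k<n. Gs (Suc k) * Fs (Suc k) - Es k * Fs k) \<ge> - 2 * B * Fs 0"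
proof -
  have inv: "m \<le> n \<Longrightarrow> c * (\<Sum>k<m. Gs (Suc k) * Fs (Suc k) - Es k * Fs k)
     \<ge> Fs m * Ds m + c * (Es m * Fs m - Es 0 * Fs 0 - Fs 0 * (Gs 0 - Gs m)) \<and> Fs m \<le> Fs 0" for m
  proof (induction m)
    case 0 then show ?case using D0 by simp
  next
    case (Suc m)
    hence m: "m < n" by simp
    from Suc m have IH: "c * (\<Sum>k<m. Gs (Suc k) * Fs (Suc k) - Es k * Fs k)
     \<ge> Fs m * Ds m + c * (Es m * Fs m - Es 0 * Fs 0 - Fs 0 * (Gs 0 - Gs m))" and F0: "Fs m \<le> Fs 0" by auto
    have f1: "Fs (Suc m) \<le> Fs m" using Fdec m by auto
    have fn: "0 \<le> Fs (Suc m)" using Fnn m by auto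
    have dn: "0 \<le> Ds m" using Dnn m by auto
    have g1: "Gs (Suc m) \<le> Gs m" using Gdec m by auto
    have a1: "Fs (Suc m) * Ds (Suc m) \<le> Fs (Suc m) * (Ds m + c * (Gs m - Es (Suc m)))"
      using env[OF m] fn by (intro mult_left_mono) auto
    have a2: "Fs (Suc m) * Ds m \<le> Fs m * Ds m" using f1 dn by (intro mult_right_mono) auto
    have a3: "Fs (Suc m) * (Gs m - Gs (Suc m)) \<le> Fs 0 * (Gs m - Gs (Suc m))"
      using f1 F0 g1 by (intro mult_right_mono) auto
    have a4: "c * (Fs (Suc m) * (Gs m - Gs (Suc m))) \<le> c * (Fs 0 * (Gs m - Gs (Suc m)))"
      using a3 c by (intro mult_left_mono) auto
    have "c * (\<Sum>k<Suc m. Gs (Suc k) * Fs (Suc k) - Es k * Fs k)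
        = c * (\<Sum>k<m. Gs (Suc k) * Fs (Suc k) - Es k * Fs k) + c * (Gs (Suc m) * Fs (Suc m) - Es m * Fs m)"
      by (simp add: algebra_simps)
    moreover have "Fs (Suc m) * Ds (Suc m) + c * (Es (Suc m) * Fs (Suc m) - Es 0 * Fs 0 - Fs 0 * (Gs 0 - Gs (Suc m)))
        \<le> Fs m * Ds m + c * (Es m * Fs m - Es 0 * Fs 0 - Fs 0 * (Gs 0 - Gs m)) + c * (Gs (Suc m) * Fs (Suc m) - Es m * Fs m)"
      using a1 a2 a4 by (simp add: algebra_simps)
    ultimately show ?case using IH F0 f1 by linarith
  qed
  from inv[of n] have I: "c * (\<Sum>k<n. Gs (Suc k) * Fs (Suc k) - Es k * Fs k)
     \<ge> Fs n * Ds n + c * (Es n * Fs n - Es 0 * Fs 0 - Fs 0 * (Gs 0 - Gs n))" by simp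
  have "0 \<le> Fs n * Ds n" using Fnn Dnn by simp
  moreover have "0 \<le> Es n * Fs n" using Fnn Eb by simp
  moreover have "Es 0 * Fs 0 \<le> B * Fs 0" using Fnn[of 0] Eb[of 0] by (intro mult_right_mono) auto
  moreover have "Fs 0 * (Gs 0 - Gs n) \<le> Fs 0 * B" using Fnn[of 0] Gb[of 0] Gb[of n] by (intro mult_left_mono) auto
  ultimately have "- 2 * B * Fs 0 \<le> Es n * Fs n - Es 0 * Fs 0 - Fs 0 * (Gs 0 - Gs n)" and "0 \<le> Fs n * Ds n"
    by (auto simp: algebra_simps)
  hence "c * (- 2 * B * Fs 0) \<le> Fs n * Ds n + c * (Es n * Fs n - Es 0 * Fs 0 - Fs 0 * (Gs 0 - Gs n))"
    using c by (smt (verit) mult_left_mono)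
  with I have "c * (- 2 * B * Fs 0) \<le> c * (\<Sum>k<n. Gs (Suc k) * Fs (Suc k) - Es k * Fs k)" by linarith
  thus ?thesis using c by (metis mult_le_cancel_left_pos)
qed

lemma antimono_prod_integrable:
  fixes F G :: "real \<Rightarrow> real"
  assumes Fdec: "\<And>x y. x\<in>{u..v} \<Longrightarrow> y\<in>{u..v} \<Longrightarrow> x \<le> y \<Longrightarrow> F y \<le> F x"
   and Fnn: "\<And>x. x\<in>{u..v} \<Longrightarrow> 0 \<le> F x"
   and Gdec: "\<And>x y. x\<in>{u..v} \<Longrightarrow> y\<in>{u..v} \<Longrightarrow> x \<le> y \<Longrightarrow> G y \<le> G x"
   and Gnn: "\<And>x. x\<in>{u..v} \<Longrightarrow> 0 \<le> G x"
  shows "(\<lambda>x. G x * F x) integrable_on {u..v}"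
proof -
  have "mono_on {u..v} (\<lambda>x. - (G x * F x))"
  proof (rule mono_onI)
    fix x y assume "x \<in> {u..v}" "y \<in> {u..v}" "x \<le> y"
    thus "- (G x * F x) \<le> - (G y * F y)"
      using Fdec Gdec Fnn Gnn by (simp add: mult_mono)
  qed
  hence "(\<lambda>x. - (G x * F x)) integrable_on {u..v}" by (rule integrable_on_mono_on)
  hence "(\<lambda>x. - (- (G x * F x))) integrable_on {u..v}" by (rule integrable_neg)
  thus ?thesis by simp
qed

lemma nonneg_from_inv:
  fixes X K :: real
  assumes "K \<ge> 0" and "\<And>n::nat. n \<ge> 1 \<Longrightarrow> X \<ge> - K / real n"
  shows "X \<ge> 0"
proof (rule ccontr)
  assume "\<not> X \<ge> 0"
  hence X: "X < 0" by simp
  obtain n :: nat where n: "K / (- X) < real n" using reals_Archimedean2 by blast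
  have "0 \<le> K / (- X)" using X assms(1) by (intro divide_nonneg_pos) auto
  hence n1: "n \<ge> 1" using n by (cases n) auto
  have "K < real n * (- X)" using n X pos_divide_less_eq[of "- X" K "real n"] by simp
  hence "- K / real n > X" using n1 by (simp add: field_simps)
  with assms(2)[OF n1] show False by linarith
qed

lemma core:
  fixes F G E D :: "real \<Rightarrow> real" and p q c B :: real
  assumes pq: "p \<le> q" and c: "c > 0"
   and Fdec: "\<And>x y. x\<in>{p..q} \<Longrightarrow> y\<in>{p..q} \<Longrightarrow> x \<le> y \<Longrightarrow> F y \<le> F x"
   and Fnn: "\<And>x. x\<in>{p..q} \<Longrightarrow> 0 \<le> F x"
   and Gdec: "\<And>x y. x\<in>{p..q} \<Longrightarrow> y\<in>{p..q} \<Longrightarrow> x \<le> y \<Longrightarrow> G y \<le> G x"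
   and Gb: "\<And>x. x\<in>{p..q} \<Longrightarrow> 0 \<le> G x \<and> G x \<le> B"
   and Edec: "\<And>x y. x\<in>{p..q} \<Longrightarrow> y\<in>{p..q} \<Longrightarrow> x \<le> y \<Longrightarrow> E y \<le> E x"
   and Eb: "\<And>x. x\<in>{p..q} \<Longrightarrow> 0 \<le> E x \<and> E x \<le> B"
   and D0: "D p = 0" and Dnn: "\<And>x. x\<in>{p..q} \<Longrightarrow> 0 \<le> D x"
   and env: "\<And>x y. x\<in>{p..q} \<Longrightarrow> y\<in>{p..q} \<Longrightarrow> x < y \<Longrightarrow> D y - D x \<le> c * (y - x) * (G x - E y)"
  shows "integral {p..q} (\<lambda>x. E x * F x) \<le> integral {p..q} (\<lambda>x. G x * F x)"
proof (cases "p = q")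
  case True thus ?thesis by simp
next
  case False
  hence pq': "p < q" using pq by simp
  have intG: "(\<lambda>x. G x * F x) integrable_on {u..v}" if "p \<le> u" "v \<le> q" for u v
    by (rule antimono_prod_integrable) (use that Fdec Fnn Gdec Gb in auto)
  have intE: "(\<lambda>x. E x * F x) integrable_on {u..v}" if "p \<le> u" "v \<le> q" for u v
    by (rule antimono_prod_integrable) (use that Fdec Fnn Edec Eb in auto)
  have lowG: "(v - u) * (G v * F v) \<le> integral {u..v} (\<lambda>x. G x * F x)"
    if "p \<le> u" "u \<le> v" "v \<le> q" for u v
  proof -
    have "integral {u..v} (\<lambda>x. G v * F v) \<le> integral {u..v} (\<lambda>x. G x * F x)"
      by (rule integral_le) (use that intG Fdec Fnn Gdec Gb in \<open>auto intro!: mult_mono\<close>)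
    thus ?thesis using that by (simp add: mult_ac)
  qed
  have upE: "integral {u..v} (\<lambda>x. E x * F x) \<le> (v - u) * (E u * F u)"
    if "p \<le> u" "u \<le> v" "v \<le> q" for u v
  proof -
    have "integral {u..v} (\<lambda>x. E x * F x) \<le> integral {u..v} (\<lambda>x. E u * F u)"
      by (rule integral_le) (use that intE Fdec Fnn Edec Eb in \<open>auto intro!: mult_mono\<close>)
    thus ?thesis using that by (simp add: mult_ac)
  qed
  define K where "K = 2 * B * F p * (q - p)"
  have B0: "0 \<le> B" using Gb[of p] pq by auto
  have K0: "K \<ge> 0" unfolding K_def using B0 Fnn[of p] pq by simp
  show ?thesis
  proof -
    have "integral {p..q} (\<lambda>x. G x * F x) - integral {p..q} (\<lambda>x. E x * F x) \<ge> - K / real n"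
      if n1: "n \<ge> 1" for n :: nat
    proof -
      define h where "h = (q - p) / real n"
      define x where "x k = p + real k * h" for k :: nat
      have h0: "h > 0" unfolding h_def using pq' n1 by simp
      have xn: "x n = q" unfolding x_def h_def using n1 by simp
      have x0: "x 0 = p" unfolding x_def by simp
      have xs: "x (Suc k) = x k + h" for k unfolding x_def by (simp add: algebra_simps)
      have xmono: "k \<le> m \<Longrightarrow> x k \<le> x m" for k m unfolding x_def using h0
        by (simp add: mult_right_mono)
      have xin: "k \<le> n \<Longrightarrow> x k \<in> {p..q}" for k using xmono[of 0 k] xmono[of k n] x0 xn by auto
      have split: "m \<le> n \<Longrightarrow> integral {p..x m} \<phi> = (\<Sum>k<m. integral {x k..x (Suc k)} \<phi>)"
        if "\<And>u v. p \<le> u \<Longrightarrow> v \<le> q \<Longrightarrow> \<phi> integrable_on {u..v}" for m and \<phi> :: "real \<Rightarrow> real"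
      proof (induction m)
        case 0 thus ?case using x0 by simp
      next
        case (Suc m)
        have "integral {p..x m} \<phi> + integral {x m..x (Suc m)} \<phi> = integral {p..x (Suc m)} \<phi>"
          apply (rule Henstock_Kurzweil_Integration.integral_combine)
          using xmono[of 0 m] x0 xs h0 that xin[of "Suc m"] Suc.prems by auto
        thus ?case using Suc by simp
      qed
      have sG: "integral {p..q} (\<lambda>x. G x * F x) = (\<Sum>k<n. integral {x k..x (Suc k)} (\<lambda>x. G x * F x))"
        using split[of "\<lambda>x. G x * F x" n] intG xn by simp
      have sE: "integral {p..q} (\<lambda>x. E x * F x) = (\<Sum>k<n. integral {x k..x (Suc k)} (\<lambda>x. E x * F x))"
        using split[of "\<lambda>x. E x * F x" n] intE xn by simp
      have piece: "integral {x k..x (Suc k)} (\<lambda>x. G x * F x) - integral {x k..x (Suc k)} (\<lambda>x. E x * F x)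
          \<ge> h * (G (x (Suc k)) * F (x (Suc k)) - E (x k) * F (x k))" if "k < n" for k
      proof -
        have a: "x k \<in> {p..q}" "x (Suc k) \<in> {p..q}" using xin that by auto
        have "x (Suc k) - x k = h" using xs by simp
        thus ?thesis using lowG[of "x k" "x (Suc k)"] upE[of "x k" "x (Suc k)"] a h0
          by (auto simp: algebra_simps)
      qed
      have "integral {p..q} (\<lambda>x. G x * F x) - integral {p..q} (\<lambda>x. E x * F x)
          = (\<Sum>k<n. integral {x k..x (Suc k)} (\<lambda>x. G x * F x) - integral {x k..x (Suc k)} (\<lambda>x. E x * F x))"
        using sG sE by (simp add: sum_subtractf)
      also have "\<dots> \<ge> (\<Sum>k<n. h * (G (x (Suc k)) * F (x (Suc k)) - E (x k) * F (x k)))"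
        by (rule sum_mono) (use piece in auto)
      finally have A: "integral {p..q} (\<lambda>x. G x * F x) - integral {p..q} (\<lambda>x. E x * F x)
          \<ge> h * (\<Sum>k<n. G (x (Suc k)) * F (x (Suc k)) - E (x k) * F (x k))"
        by (simp add: sum_distrib_left)
      have ab: "(\<Sum>k<n. G (x (Suc k)) * F (x (Suc k)) - E (x k) * F (x k)) \<ge> - 2 * B * F (x 0)"
      proof (rule abel_ineq[where c = "c * h" and Ds = "\<lambda>k. D (x k)"])
        show "0 < c * h" using c h0 by simp
        show "D (x 0) = 0" using x0 D0 by simp
        fix k
        show "k < n \<Longrightarrow> F (x (Suc k)) \<le> F (x k)" using Fdec xin xmono[of k "Suc k"] by auto
        show "k \<le> n \<Longrightarrow> 0 \<le> F (x k)" using Fnn xin by auto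
        show "k < n \<Longrightarrow> G (x (Suc k)) \<le> G (x k)" using Gdec xin xmono[of k "Suc k"] by auto
        show "k \<le> n \<Longrightarrow> 0 \<le> G (x k) \<and> G (x k) \<le> B" using Gb xin by auto
        show "k \<le> n \<Longrightarrow> 0 \<le> E (x k) \<and> E (x k) \<le> B" using Eb xin by auto
        show "k \<le> n \<Longrightarrow> 0 \<le> D (x k)" using Dnn xin by auto
        show "k < n \<Longrightarrow> D (x (Suc k)) - D (x k) \<le> c * h * (G (x k) - E (x (Suc k)))"
          using env[of "x k" "x (Suc k)"] xin[of k] xin[of "Suc k"] xs h0 by auto
      qed
      have "h * (- 2 * B * F (x 0)) \<le> h * (\<Sum>k<n. G (x (Suc k)) * F (x (Suc k)) - E (x k) * F (x k))"
        using ab h0 by (intro mult_left_mono) auto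
      moreover have "h * (- 2 * B * F (x 0)) = - K / real n"
        unfolding K_def h_def x0 by (simp add: field_simps minus_divide_left)
      ultimately show ?thesis using A by linarith
    qed
    hence "integral {p..q} (\<lambda>x. G x * F x) - integral {p..q} (\<lambda>x. E x * F x) \<ge> 0"
      by (intro nonneg_from_inv[OF K0]) auto
    thus ?thesis by simp
  qed
qed

lemma cont_from:
  assumes "continuous_on ({tlo..thi} \<times> {0..ebar} \<times> {0..ebar}) (\<lambda>(\<theta>, e, et). tpi \<theta> e et)"
    and "\<theta> \<in> {tlo..thi}"
  shows "continuous_on {0..ebar} (pi_of tpi \<theta>)"
proof -
  have "continuous_on {0..ebar} ((\<lambda>(\<theta>, e, et). tpi \<theta> e et) \<circ> (\<lambda>e. (\<theta>, e, e)))"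
    by (rule continuous_on_compose[OF _ continuous_on_subset[OF assms(1)]])
       (use assms(2) in \<open>auto intro!: continuous_intros\<close>)
  thus ?thesis by (simp add: o_def pi_of_def[abs_def])
qed

locale model =
  fixes tpi :: "real \<Rightarrow> real \<Rightarrow> real \<Rightarrow> real" and tlo thi ebar a b :: real and pi0 :: "real \<Rightarrow> real"
  assumes tlt: "tlo < thi" and epos: "ebar > 0"
  and cont: "\<And>\<theta>. \<theta> \<in> {tlo..thi} \<Longrightarrow> continuous_on {0..ebar} (pi_of tpi \<theta>)"
  and conc: "\<And>\<theta> x y t. \<theta>\<in>{tlo..thi} \<Longrightarrow> x\<in>{0..ebar} \<Longrightarrow> y\<in>{0..ebar} \<Longrightarrow> x\<noteq>y \<Longrightarrow> 0<t \<Longrightarrow> t<1 \<Longrightarrow>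
          t * pi_of tpi \<theta> x + (1-t) * pi_of tpi \<theta> y < pi_of tpi \<theta> (t*x+(1-t)*y)"
  and form: "\<And>\<theta> e. \<theta>\<in>{tlo..thi} \<Longrightarrow> e\<in>{0..ebar} \<Longrightarrow> pi_of tpi \<theta> e = pi0 e - \<theta>*(a*e+b)"
begin

abbreviation "P \<equiv> pi_of tpi"
abbreviation "S d \<equiv> belief_compatible ebar d"
abbreviation "Pol \<equiv> policies tpi tlo thi ebar"
abbreviation "pd \<equiv> pi_d tpi ebar"
abbreviation "gd \<equiv> gamma_d tpi ebar"

lemma S_sub: "S d \<subseteq> {0..ebar}" by (auto simp: belief_compatible_def)
lemma S_mem: "e \<in> S d \<Longrightarrow> e \<in> {0..ebar}" using S_sub by blast
lemma ebar_S: "ebar \<in> S d" using epos by (auto simp: belief_compatible_def)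

lemma pid_max:
  assumes "d \<in> Pol" "\<theta> \<in> {tlo..thi}"
  shows "\<exists>e\<in>S d. pd d \<theta> = P \<theta> e \<and> (\<forall>e'\<in>S d. P \<theta> e' \<le> P \<theta> e)"
proof -
  obtain e where e: "e \<in> S d" "\<forall>e'\<in>S d. P \<theta> e' \<le> P \<theta> e"
    using assms unfolding policies_def by blast
  have "pd d \<theta> = P \<theta> e" unfolding pi_d_def
    by (rule cSup_eq_maximum) (use e in auto)
  thus ?thesis using e by blast
qed

lemma pid_ge: "d \<in> Pol \<Longrightarrow> \<theta> \<in> {tlo..thi} \<Longrightarrow> e \<in> S d \<Longrightarrow> P \<theta> e \<le> pd d \<theta>"
  using pid_max by fastforce

lemma gamma_props:
  assumes d: "d \<in> Pol" and th: "\<theta> \<in> {tlo..thi}"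
  shows "gd d \<theta> \<in> S d \<and> P \<theta> (gd d \<theta>) = pd d \<theta>"
proof -
  define M where "M = {e. e \<in> S d \<and> P \<theta> e = pd d \<theta>}"
  obtain m where m: "m \<in> M" using pid_max[OF d th] unfolding M_def by force
  have ex: "\<exists>l\<in>M. \<forall>y\<in>M. l \<le> y"
  proof (cases "\<forall>y\<in>M. m \<le> y")
    case True thus ?thesis using m by blast
  next
    case False
    then obtain m' where m': "m' \<in> M" "m' < m" by force
    have "\<forall>y\<in>M. m' \<le> y"
    proof (rule ccontr)
      assume "\<not> (\<forall>y\<in>M. m' \<le> y)"
      then obtain y where y: "y \<in> M" "y < m'" by force
      define t where "t = (m - m') / (m - y)"
      have t0: "0 < t" "t < 1" unfolding t_def using y m' by (auto simp: field_simps)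
      have nz: "m - y \<noteq> 0" using y m' by simp
      have "t * (m - y) = m - m'" unfolding t_def using nz by simp
      moreover have "t * y + (1 - t) * m = m - t * (m - y)" by (simp add: algebra_simps)
      ultimately have tm: "t * y + (1 - t) * m = m'" by simp
      have inE: "y \<in> {0..ebar}" "m \<in> {0..ebar}" using y(1) m S_mem unfolding M_def by blast+
      have "t * P \<theta> y + (1 - t) * P \<theta> m < P \<theta> (t * y + (1 - t) * m)"
        by (rule conc[OF th inE]) (use y m' t0 in auto)
      moreover have "P \<theta> y = pd d \<theta>" "P \<theta> m = pd d \<theta>" "P \<theta> m' = pd d \<theta>"
        using y m m' unfolding M_def by auto
      ultimately show False using tm by (simp add: algebra_simps)
    qed
    thus ?thesis using m' by blast
  qed
  then obtain l where l: "l \<in> M" "\<forall>y\<in>M. l \<le> y" by blast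
  have "gd d \<theta> = l" unfolding gamma_d_def
    by (rule Least_equality) (use l in \<open>auto simp: M_def\<close>)
  thus ?thesis using l unfolding M_def by auto
qed

lemma gamma_in: "d \<in> Pol \<Longrightarrow> \<theta> \<in> {tlo..thi} \<Longrightarrow> gd d \<theta> \<in> {0..ebar}"
  using gamma_props[of d \<theta>] S_mem[of "gd d \<theta>" d] by simp

lemma env:
  assumes d: "d \<in> Pol" and x: "x \<in> {tlo..thi}" and y: "y \<in> {tlo..thi}"
  shows "pd d x - pd d y \<le> (y - x) * (a * gd d x + b)"
proof -
  have g: "gd d x \<in> S d" "P x (gd d x) = pd d x" using gamma_props[OF d x] by auto
  have "P y (gd d x) \<le> pd d y" using pid_ge[OF d y g(1)] .
  moreover have "P y (gd d x) = pi0 (gd d x) - y * (a * gd d x + b)"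
    using form[OF y] g(1) S_mem by auto
  moreover have "P x (gd d x) = pi0 (gd d x) - x * (a * gd d x + b)"
    using form[OF x] g(1) S_mem by auto
  ultimately show ?thesis using g(2) by (simp add: algebra_simps)
qed

lemma gamma_mono:
  assumes d: "d \<in> Pol" and x: "x \<in> {tlo..thi}" and y: "y \<in> {tlo..thi}" and xy: "x < y"
  shows "(a > 0 \<longrightarrow> gd d y \<le> gd d x) \<and> (a < 0 \<longrightarrow> gd d x \<le> gd d y)"
proof -
  have e1: "pd d x - pd d y \<le> (y - x) * (a * gd d x + b)" using env[OF d x y] .
  have e2: "pd d y - pd d x \<le> (x - y) * (a * gd d y + b)" using env[OF d y x] .
  have "0 \<le> (y - x) * (a * gd d x + b) + (x - y) * (a * gd d y + b)" using e1 e2 by linarith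
  hence "0 \<le> (y - x) * (a * (gd d x - gd d y))" by (simp add: algebra_simps)
  hence "0 \<le> a * (gd d x - gd d y)" using xy by (simp add: zero_le_mult_iff)
  thus ?thesis by (auto simp: zero_le_mult_iff)
qed

lemma pid_cont: assumes d: "d \<in> Pol" shows "continuous_on {tlo..thi} (pd d)"
proof -
  define L where "L = \<bar>a\<bar> * ebar + \<bar>b\<bar>"
  have bnd: "\<bar>a * gd d x + b\<bar> \<le> L" if "x \<in> {tlo..thi}" for x
  proof -
    have g: "0 \<le> gd d x" "gd d x \<le> ebar" using gamma_in[OF d that] by auto
    have "\<bar>a * gd d x\<bar> = \<bar>a\<bar> * gd d x" using g by (simp add: abs_mult)
    also have "\<dots> \<le> \<bar>a\<bar> * ebar" using g by (simp add: mult_left_mono)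
    finally show ?thesis unfolding L_def by linarith
  qed
  have one: "pd d x - pd d y \<le> L * \<bar>x - y\<bar>" if "x \<in> {tlo..thi}" "y \<in> {tlo..thi}" for x y
  proof -
    have "pd d x - pd d y \<le> (y - x) * (a * gd d x + b)" using env[OF d that] .
    also have "\<dots> \<le> \<bar>(y - x) * (a * gd d x + b)\<bar>" by simp
    also have "\<dots> = \<bar>x - y\<bar> * \<bar>a * gd d x + b\<bar>" by (simp add: abs_mult abs_minus_commute)
    also have "\<dots> \<le> \<bar>x - y\<bar> * L" using bnd[OF that(1)] by (simp add: mult_left_mono)
    finally show ?thesis by (simp add: mult.commute)
  qed
  have "L-lipschitz_on {tlo..thi} (pd d)"
  proof (rule lipschitz_onI)
    fix x y assume "x \<in> {tlo..thi}" "y \<in> {tlo..thi}"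
    thus "dist (pd d x) (pd d y) \<le> L * dist x y"
      using one[of x y] one[of y x] by (simp add: dist_real_def abs_minus_commute abs_le_iff)
  next
    show "0 \<le> L" unfolding L_def using epos by simp
  qed
  thus ?thesis by (rule lipschitz_on_continuous_on)
qed

lemma fd_props:
  assumes fd: "full_disclosure tpi tlo thi ebar dF"
  shows "dF \<in> Pol \<and> (\<forall>\<theta>\<in>{tlo..thi}. \<forall>e\<in>{0..ebar}. P \<theta> e \<le> pd dF \<theta>)"
proof -
  have mx: "\<exists>m\<in>S dF. \<forall>e\<in>{0..ebar}. P \<theta> e \<le> P \<theta> m" if th: "\<theta> \<in> {tlo..thi}" for \<theta>
  proof -
    obtain m where m: "m \<in> {0..ebar}" "\<forall>e\<in>{0..ebar}. P \<theta> e \<le> P \<theta> m"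
      using continuous_attains_sup[OF compact_Icc _ cont[OF th]] epos by auto
    have "\<forall>e'\<in>{0..ebar}. dF e' = dF m \<longrightarrow> e' = m"
      using m fd th unfolding full_disclosure_def by blast
    hence "m \<in> S dF" unfolding belief_compatible_def using m by auto
    thus ?thesis using m by blast
  qed
  have pol: "dF \<in> Pol" unfolding policies_def
  proof (intro CollectI conjI ballI)
    show "dF ` {0..ebar} \<subseteq> {0..ebar}" using fd unfolding full_disclosure_def by blast
  next
    fix \<theta> assume th: "\<theta> \<in> {tlo..thi}"
    then obtain m where "m \<in> S dF" "\<forall>e\<in>{0..ebar}. P \<theta> e \<le> P \<theta> m" using mx by blast
    thus "\<exists>e\<in>S dF. \<forall>e'\<in>S dF. P \<theta> e' \<le> P \<theta> e" using S_mem by blast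
  qed
  have "\<forall>\<theta>\<in>{tlo..thi}. \<forall>e\<in>{0..ebar}. P \<theta> e \<le> pd dF \<theta>"
  proof (intro ballI)
    fix \<theta> e assume th: "\<theta> \<in> {tlo..thi}" and e: "e \<in> {0..ebar}"
    obtain m where m: "m \<in> S dF" "\<forall>e\<in>{0..ebar}. P \<theta> e \<le> P \<theta> m" using mx[OF th] by blast
    have "P \<theta> m \<le> pd dF \<theta>" using pid_ge[OF pol th m(1)] .
    thus "P \<theta> e \<le> pd dF \<theta>" using m(2) e by force
  qed
  thus ?thesis using pol by blast
qed

lemma pd_le_F:
  assumes fd: "full_disclosure tpi tlo thi ebar dF" and d: "d \<in> Pol" and th: "\<theta> \<in> {tlo..thi}"
  shows "pd d \<theta> \<le> pd dF \<theta>"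
proof -
  obtain e where "e \<in> S d" "pd d \<theta> = P \<theta> e" using pid_max[OF d th] by blast
  thus ?thesis using fd_props[OF fd] th S_mem[of e d] by simp
qed

lemma elow:
  assumes th: "\<theta> \<in> {tlo..thi}" and el: "e_low tpi ebar \<theta> = ebar"
    and e: "e \<in> {0..ebar}" "e \<noteq> ebar"
  shows "P \<theta> e < P \<theta> ebar"
proof (rule ccontr)
  assume "\<not> P \<theta> e < P \<theta> ebar"
  hence ge: "P \<theta> ebar \<le> P \<theta> e" by simp
  define A where "A = {0..ebar} \<inter> P \<theta> -` {P \<theta> ebar..}"
  have cl: "closed A" unfolding A_def
    by (rule continuous_closed_preimage[OF cont[OF th]]) auto
  have eA: "e \<in> A" using e ge unfolding A_def by auto
  have bdd: "bdd_below A" unfolding A_def by (rule bdd_belowI[of _ 0]) auto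
  have IA: "Inf A \<in> A" using closed_contains_Inf[OF _ bdd cl] eA by blast
  have low: "\<And>y. y \<in> A \<Longrightarrow> Inf A \<le> y" by (rule cInf_lower[OF _ bdd])
  have mem: "y \<in> A \<longleftrightarrow> y \<in> {0..ebar} \<and> P \<theta> y \<ge> P \<theta> ebar" for y unfolding A_def by auto
  have "e_low tpi ebar \<theta> = Inf A" unfolding e_low_def
  proof (rule Least_equality)
    show "Inf A \<in> {0..ebar} \<and> P \<theta> ebar \<le> P \<theta> (Inf A)" using IA mem by blast
    fix y assume "y \<in> {0..ebar} \<and> P \<theta> ebar \<le> P \<theta> y"
    thus "Inf A \<le> y" using low mem by blast
  qed
  hence "ebar \<le> e" using low[OF eA] el by simp
  thus False using e by auto
qed

lemma at_top:
  assumes th: "\<theta> \<in> {tlo..thi}" and top: "\<forall>e\<in>{0..ebar}. e \<noteq> ebar \<longrightarrow> P \<theta> e < P \<theta> ebar"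
    and d: "d \<in> Pol"
  shows "gd d \<theta> = ebar \<and> pd d \<theta> = P \<theta> ebar"
proof -
  have g: "gd d \<theta> \<in> {0..ebar}" "P \<theta> (gd d \<theta>) = pd d \<theta>" using gamma_props[OF d th] S_mem by auto
  have "P \<theta> ebar \<le> pd d \<theta>" using pid_ge[OF d th ebar_S] .
  hence "gd d \<theta> = ebar" using top g(1) g(2) by (metis not_le)
  thus ?thesis using g by simp
qed

lemma Denv:
  assumes d: "d \<in> Pol" and dF: "dF \<in> Pol" and x: "x \<in> {tlo..thi}" and y: "y \<in> {tlo..thi}"
  shows "(pd dF y - pd d y) - (pd dF x - pd d x) \<le> a * (y - x) * (gd d x - gd dF y)"
proof -
  have "pd d x - pd d y \<le> (y - x) * (a * gd d x + b)" using env[OF d x y] .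
  moreover have "pd dF y - pd dF x \<le> (x - y) * (a * gd dF y + b)" using env[OF dF y x] .
  ultimately show ?thesis by (simp add: algebra_simps)
qed

end


theorem proposition6:
  fixes tpi :: "real \<Rightarrow> real \<Rightarrow> real \<Rightarrow> real"
    and tlo thi ebar :: real
    and f :: "real \<Rightarrow> real"
    and pi0 :: "real \<Rightarrow> real"
    and a b t_tri :: real
  assumes theta_interval: "tlo < thi"
    and ebar_pos: "ebar > 0"
    (* density f = F' on Theta, continuous *)
    and f_nonneg: "\<forall>\<theta>\<in>{tlo..thi}. f \<theta> \<ge> 0"
    and f_density: "(f has_integral 1) {tlo..thi}"
    and f_cont: "continuous_on {tlo..thi} f"
    (* standing assumptions on tilde pi *)
    and tpi_cont: "continuous_on ({tlo..thi} \<times> {0..ebar} \<times> {0..ebar})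
                     (\<lambda>(\<theta>, e, et). tpi \<theta> e et)"
    and tpi_C2: "C2_on ({tlo<..<thi} \<times> {0<..<ebar} \<times> {0<..<ebar})
                     (\<lambda>(\<theta>, e, et). tpi \<theta> e et)"
    and tpi_incr: "\<forall>\<theta>\<in>{tlo..thi}. \<forall>et\<in>{0..ebar}. \<forall>e1\<in>{0..ebar}. \<forall>e2\<in>{0..ebar}.
                     e1 < e2 \<longrightarrow> tpi \<theta> e1 et < tpi \<theta> e2 et"
    and tpi_decr: "\<forall>\<theta>\<in>{tlo..thi}. \<forall>e\<in>{0..ebar}. \<forall>et1\<in>{0..ebar}. \<forall>et2\<in>{0..ebar}.
                     et1 < et2 \<longrightarrow> tpi \<theta> e et2 < tpi \<theta> e et1"
    and pi_strict_concave: "\<forall>\<theta>\<in>{tlo..thi}. \<forall>x\<in>{0..ebar}. \<forall>y\<in>{0..ebar}. \<forall>t::real.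
                     x \<noteq> y \<longrightarrow> 0 < t \<longrightarrow> t < 1 \<longrightarrow>
                     t * pi_of tpi \<theta> x + (1 - t) * pi_of tpi \<theta> y
                       < pi_of tpi \<theta> (t * x + (1 - t) * y)"
    and pi_end: "\<forall>\<theta>\<in>{tlo..thi}. pi_of tpi \<theta> 0 < pi_of tpi \<theta> ebar"
    (* specific form of pi *)
    and pi_form: "\<forall>\<theta>\<in>{tlo..thi}. \<forall>e\<in>{0..ebar}. pi_of tpi \<theta> e = pi0 e - \<theta> * (a * e + b)"
    (* f continuously differentiable on the interior of Theta *)
    and f_C1: "\<exists>f'. (\<forall>\<theta>\<in>{tlo<..<thi}. (f has_real_derivative f' \<theta>) (at \<theta>)) \<and>
                    continuous_on {tlo<..<thi} f'"
    and t_tri_in: "t_tri \<in> {tlo..thi}"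
    and cases: "(a > 0 \<and> (\<forall>\<theta>\<in>{tlo..t_tri}. e_low tpi ebar \<theta> = ebar) \<and>
                   (\<forall>x\<in>{t_tri..thi}. \<forall>y\<in>{t_tri..thi}. x \<le> y \<longrightarrow> f y \<le> f x))
              \<or> (a < 0 \<and> (\<forall>\<theta>\<in>{t_tri..thi}. e_low tpi ebar \<theta> = ebar) \<and>
                   (\<forall>x\<in>{tlo..t_tri}. \<forall>y\<in>{tlo..t_tri}. x \<le> y \<longrightarrow> f x \<le> f y))"
  shows "\<forall>dF. full_disclosure tpi tlo thi ebar dF \<longrightarrow>
           {(Emission tpi tlo thi ebar f d, Profit tpi tlo thi ebar f d) | d.
               pareto_efficient tpi tlo thi ebar f d}
           = {(Emission tpi tlo thi ebar f dF, Profit tpi tlo thi ebar f dF)}"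
proof -
  interpret model tpi tlo thi ebar a b pi0
  proof
    show "tlo < thi" by (rule theta_interval)
    show "ebar > 0" by (rule ebar_pos)
    show "\<And>\<theta>. \<theta> \<in> {tlo..thi} \<Longrightarrow> continuous_on {0..ebar} (pi_of tpi \<theta>)"
      by (rule cont_from[OF tpi_cont])
    show "\<And>\<theta> x y t. \<theta>\<in>{tlo..thi} \<Longrightarrow> x\<in>{0..ebar} \<Longrightarrow> y\<in>{0..ebar} \<Longrightarrow> x\<noteq>y \<Longrightarrow> 0<t \<Longrightarrow> t<1 \<Longrightarrow>
          t * pi_of tpi \<theta> x + (1-t) * pi_of tpi \<theta> y < pi_of tpi \<theta> (t*x+(1-t)*y)"
      using pi_strict_concave by blast
    show "\<And>\<theta> e. \<theta>\<in>{tlo..thi} \<Longrightarrow> e\<in>{0..ebar} \<Longrightarrow> pi_of tpi \<theta> e = pi0 e - \<theta>*(a*e+b)"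
      using pi_form by blast
  qed
  show ?thesis
  proof (intro allI impI)
    fix dF assume fd: "full_disclosure tpi tlo thi ebar dF"
    have dF: "dF \<in> Pol" using fd_props[OF fd] by blast
    have PiLe: "Profit tpi tlo thi ebar f d \<le> Profit tpi tlo thi ebar f dF" if d: "d \<in> Pol" for d
      unfolding Profit_def
    proof (rule integral_le)
      show "(\<lambda>\<theta>. pd d \<theta> * f \<theta>) integrable_on {tlo..thi}"
        by (intro integrable_continuous_interval continuous_on_mult pid_cont d f_cont)
      show "(\<lambda>\<theta>. pd dF \<theta> * f \<theta>) integrable_on {tlo..thi}"
        by (intro integrable_continuous_interval continuous_on_mult pid_cont dF f_cont)
      fix \<theta> assume th: "\<theta> \<in> {tlo..thi}"
      show "pd d \<theta> * f \<theta> \<le> pd dF \<theta> * f \<theta>"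
        using pd_le_F[OF fd d th] f_nonneg th by (intro mult_right_mono) auto
    qed
    have GaGe: "Emission tpi tlo thi ebar f dF \<le> Emission tpi tlo thi ebar f d" if d: "d \<in> Pol" for d
    proof -
      have gb: "0 \<le> gd d \<theta> \<and> gd d \<theta> \<le> ebar" "0 \<le> gd dF \<theta> \<and> gd dF \<theta> \<le> ebar"
        if "\<theta> \<in> {tlo..thi}" for \<theta> using gamma_in[OF d that] gamma_in[OF dF that] by auto
      define D where "D \<theta> = pd dF \<theta> - pd d \<theta>" for \<theta>
      have Dnn: "0 \<le> D \<theta>" if "\<theta> \<in> {tlo..thi}" for \<theta>
        unfolding D_def using pd_le_F[OF fd d that] by simp
      have Denv': "D y - D x \<le> a * (y - x) * (gd d x - gd dF y)"
        if "x \<in> {tlo..thi}" "y \<in> {tlo..thi}" for x y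
        unfolding D_def using Denv[OF d dF that] .
      have topP: "\<forall>e\<in>{0..ebar}. e \<noteq> ebar \<longrightarrow> P \<theta> e < P \<theta> ebar"
        if "\<theta> \<in> {tlo..thi}" "e_low tpi ebar \<theta> = ebar" for \<theta>
        using elow[OF that] by blast
      have tin: "tlo \<le> t_tri" "t_tri \<le> thi" using t_tri_in by auto
      have intE: "(\<lambda>\<theta>. gd dd \<theta> * f \<theta>) integrable_on {u..v}"
        if "(\<lambda>\<theta>. gd dd \<theta> * f \<theta>) integrable_on {tlo..t_tri}"
           "(\<lambda>\<theta>. gd dd \<theta> * f \<theta>) integrable_on {t_tri..thi}" "u = tlo" "v = thi" for dd u v
        using Henstock_Kurzweil_Integration.integrable_combine[OF tin that(1,2)] that(3,4) by simp
      have splitI: "integral {tlo..thi} (\<lambda>\<theta>. gd dd \<theta> * f \<theta>)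
          = integral {tlo..t_tri} (\<lambda>\<theta>. gd dd \<theta> * f \<theta>) + integral {t_tri..thi} (\<lambda>\<theta>. gd dd \<theta> * f \<theta>)"
        if "(\<lambda>\<theta>. gd dd \<theta> * f \<theta>) integrable_on {tlo..t_tri}"
           "(\<lambda>\<theta>. gd dd \<theta> * f \<theta>) integrable_on {t_tri..thi}" for dd
        using Henstock_Kurzweil_Integration.integral_combine[OF tin intE[OF that refl refl]] by simp
      have eqint: "integral {u..v} (\<lambda>\<theta>. gd d \<theta> * f \<theta>) = integral {u..v} (\<lambda>\<theta>. gd dF \<theta> * f \<theta>)
          \<and> (\<lambda>\<theta>. gd d \<theta> * f \<theta>) integrable_on {u..v} \<and> (\<lambda>\<theta>. gd dF \<theta> * f \<theta>) integrable_on {u..v}"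
        if uv: "tlo \<le> u" "v \<le> thi" and tp: "\<forall>\<theta>\<in>{u..v}. e_low tpi ebar \<theta> = ebar" for u v
      proof -
        have eq: "gd d \<theta> = ebar" "gd dF \<theta> = ebar" if "\<theta> \<in> {u..v}" for \<theta>
        proof -
          have th: "\<theta> \<in> {tlo..thi}" using that uv by auto
          show "gd d \<theta> = ebar" "gd dF \<theta> = ebar"
            using at_top[OF th topP[OF th] d] at_top[OF th topP[OF th] dF] tp that th by auto
        qed
        have ic: "(\<lambda>\<theta>. ebar * f \<theta>) integrable_on {u..v}"
          by (intro integrable_continuous_interval continuous_on_mult continuous_on_const
                continuous_on_subset[OF f_cont]) (use uv in auto)
        have "(\<lambda>\<theta>. gd d \<theta> * f \<theta>) integrable_on {u..v}" by (rule integrable_eq[OF ic]) (simp add: eq)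
        moreover have "(\<lambda>\<theta>. gd dF \<theta> * f \<theta>) integrable_on {u..v}" by (rule integrable_eq[OF ic]) (simp add: eq)
        moreover have "integral {u..v} (\<lambda>\<theta>. gd d \<theta> * f \<theta>) = integral {u..v} (\<lambda>\<theta>. gd dF \<theta> * f \<theta>)"
          by (rule integral_cong) (simp add: eq)
        ultimately show ?thesis by blast
      qed
      from cases show ?thesis
      proof (elim disjE conjE)
        assume apos: "a > 0" and top: "\<forall>\<theta>\<in>{tlo..t_tri}. e_low tpi ebar \<theta> = ebar"
          and fdec: "\<forall>x\<in>{t_tri..thi}. \<forall>y\<in>{t_tri..thi}. x \<le> y \<longrightarrow> f y \<le> f x"
        have E1: "integral {tlo..t_tri} (\<lambda>\<theta>. gd d \<theta> * f \<theta>) = integral {tlo..t_tri} (\<lambda>\<theta>. gd dF \<theta> * f \<theta>)"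
          "(\<lambda>\<theta>. gd d \<theta> * f \<theta>) integrable_on {tlo..t_tri}" "(\<lambda>\<theta>. gd dF \<theta> * f \<theta>) integrable_on {tlo..t_tri}"
          using eqint[OF order.refl tin(2) top] by auto
        have gdec: "gd dd y \<le> gd dd x" if "dd \<in> Pol" "x \<in> {t_tri..thi}" "y \<in> {t_tri..thi}" "x \<le> y" for dd x y
        proof (cases "x = y")
          case False thus ?thesis using gamma_mono[OF that(1), of x y] that tin apos by auto
        qed simp
        have I2: "(\<lambda>\<theta>. gd dd \<theta> * f \<theta>) integrable_on {t_tri..thi}" if "dd \<in> Pol" for dd
          by (rule antimono_prod_integrable)
             (use fdec f_nonneg gdec[OF that] gamma_in[OF that] tin in \<open>auto\<close>)
        have C: "integral {t_tri..thi} (\<lambda>\<theta>. gd dF \<theta> * f \<theta>) \<le> integral {t_tri..thi} (\<lambda>\<theta>. gd d \<theta> * f \<theta>)"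
        proof (rule core[where c = a and B = ebar and D = D])
          show "t_tri \<le> thi" "0 < a" using tin apos by auto
          show "D t_tri = 0" unfolding D_def
            using at_top[OF t_tri_in topP[OF t_tri_in] d] at_top[OF t_tri_in topP[OF t_tri_in] dF] top tin by auto
        qed (use fdec f_nonneg gdec[OF d] gdec[OF dF] gb Dnn Denv' tin in auto)
        show ?thesis unfolding Emission_def
          using splitI[OF E1(2) I2[OF d]] splitI[OF E1(3) I2[OF dF]] E1(1) C by linarith
      next
        assume aneg: "a < 0" and top: "\<forall>\<theta>\<in>{t_tri..thi}. e_low tpi ebar \<theta> = ebar"
          and finc: "\<forall>x\<in>{tlo..t_tri}. \<forall>y\<in>{tlo..t_tri}. x \<le> y \<longrightarrow> f x \<le> f y"
        have E2: "integral {t_tri..thi} (\<lambda>\<theta>. gd d \<theta> * f \<theta>) = integral {t_tri..thi} (\<lambda>\<theta>. gd dF \<theta> * f \<theta>)"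
          "(\<lambda>\<theta>. gd d \<theta> * f \<theta>) integrable_on {t_tri..thi}" "(\<lambda>\<theta>. gd dF \<theta> * f \<theta>) integrable_on {t_tri..thi}"
          using eqint[OF tin(1) order.refl top] by auto
        have ginc: "gd dd x \<le> gd dd y" if "dd \<in> Pol" "x \<in> {tlo..t_tri}" "y \<in> {tlo..t_tri}" "x \<le> y" for dd x y
        proof (cases "x = y")
          case False thus ?thesis using gamma_mono[OF that(1), of x y] that tin aneg by auto
        qed simp
        have I1: "(\<lambda>\<theta>. gd dd \<theta> * f \<theta>) integrable_on {tlo..t_tri}" if "dd \<in> Pol" for dd
        proof (rule integrable_on_mono_on, rule mono_onI)
          fix x y assume "x \<in> {tlo..t_tri}" "y \<in> {tlo..t_tri}" "x \<le> y"
          thus "gd dd x * f x \<le> gd dd y * f y"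
            using finc f_nonneg ginc[OF that] gamma_in[OF that] tin by (intro mult_mono) auto
        qed
        have C: "integral {- t_tri..- tlo} (\<lambda>u. gd dF (- u) * f (- u))
            \<le> integral {- t_tri..- tlo} (\<lambda>u. gd d (- u) * f (- u))"
        proof (rule core[where c = "- a" and B = ebar and D = "\<lambda>u. D (- u)"])
          show "- t_tri \<le> - tlo" "0 < - a" using tin aneg by auto
          show "D (- (- t_tri)) = 0" unfolding D_def
            using at_top[OF t_tri_in topP[OF t_tri_in] d] at_top[OF t_tri_in topP[OF t_tri_in] dF] top tin by auto
          fix x y assume xy: "x \<in> {- t_tri..- tlo}" "y \<in> {- t_tri..- tlo}"
          have m: "- x \<in> {tlo..thi}" "- y \<in> {tlo..thi}" "- x \<in> {tlo..t_tri}" "- y \<in> {tlo..t_tri}"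
            using xy tin by auto
          show "x \<le> y \<Longrightarrow> f (- y) \<le> f (- x)" using finc m by auto
          show "x \<le> y \<Longrightarrow> gd d (- y) \<le> gd d (- x)" using ginc[OF d m(4) m(3)] by auto
          show "x \<le> y \<Longrightarrow> gd dF (- y) \<le> gd dF (- x)" using ginc[OF dF m(4) m(3)] by auto
          show "x < y \<Longrightarrow> D (- y) - D (- x) \<le> - a * (y - x) * (gd d (- x) - gd dF (- y))"
            using Denv'[OF m(1) m(2)] by (simp add: algebra_simps)
        next
          fix x assume "x \<in> {- t_tri..- tlo}"
          hence m: "- x \<in> {tlo..thi}" using tin by auto
          show "0 \<le> f (- x)" using f_nonneg m by auto
          show "0 \<le> gd d (- x) \<and> gd d (- x) \<le> ebar" using gb(1)[OF m] .
          show "0 \<le> gd dF (- x) \<and> gd dF (- x) \<le> ebar" using gb(2)[OF m] .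
          show "0 \<le> D (- x)" using Dnn[OF m] .
        qed
        have R: "integral {- t_tri..- tlo} (\<lambda>u. gd dd (- u) * f (- u)) = integral {tlo..t_tri} (\<lambda>\<theta>. gd dd \<theta> * f \<theta>)" for dd
          using Henstock_Kurzweil_Integration.integral_reflect_real[of t_tri tlo "\<lambda>\<theta>. gd dd \<theta> * f \<theta>"] by simp
        show ?thesis unfolding Emission_def
          using splitI[OF I1[OF d] E2(2)] splitI[OF I1[OF dF] E2(3)] E2(1) C R[of d] R[of dF] by linarith
      qed
    qed
    let ?pt = "\<lambda>d. (Emission tpi tlo thi ebar f d, Profit tpi tlo thi ebar f d)"
    have effF: "pareto_efficient tpi tlo thi ebar f dF"
      unfolding pareto_efficient_def using dF PiLe GaGe by force
    have eff_eq: "?pt d = ?pt dF" if "pareto_efficient tpi tlo thi ebar f d" for d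
    proof -
      have d: "d \<in> Pol" using that unfolding pareto_efficient_def by blast
      have "\<not> (Profit tpi tlo thi ebar f dF > Profit tpi tlo thi ebar f d \<or>
           Emission tpi tlo thi ebar f dF < Emission tpi tlo thi ebar f d)"
        using that dF PiLe[OF d] GaGe[OF d] unfolding pareto_efficient_def by blast
      thus ?thesis using PiLe[OF d] GaGe[OF d] by auto
    qed
    show "{(Emission tpi tlo thi ebar f d, Profit tpi tlo thi ebar f d) | d.
               pareto_efficient tpi tlo thi ebar f d}
           = {(Emission tpi tlo thi ebar f dF, Profit tpi tlo thi ebar f dF)}"
      using effF eff_eq by blast
  qed
qed

end
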